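(* Let $A\in\mathbb{R}^{m\times n}$ with $m>n$ be a full-rank standardized matrix with no two distinct rows parallel, let $x\in\mathbb{R}^n$, and let $b=Ax$. Let $x_{k-1}$ be the $(k-1)$-st iterate of the two-subspace Kaczmarz method, and let $x_k$ be the next iterate. Then, conditionally on $x_{k-1}$, $$\mathbb{E}\|x-x_k\|_2^2\le\left(\left(1-\frac1R\right)^2-\frac DR\right)\|x-x_{k-1}\|_2^2,$$ where $D=\min\left\{\frac{\delta^2(1-\delta)}{1+\delta},\frac{\Delta^2(1-\Delta)}{1+\Delta}\right\}$.
   Context: $A\in\mathbb{R}^{m\times n}$ has rows $a_1,\dots,a_m$. It is called standardized if $\|a_i\|_2=1$ for all $i$. "No two distinct rows parallel" means $|\langle a_r,a_s\rangle|<1$ for all $r\ne s$. Two-subspace Kaczmarz method for $(A,b)$, $b\in\mathbb{R}^m$: start from $x_0\in\mathbb{R}^n$. For $k=1,2,\dots$, choose an ordered pair $(r,s)$ of distinct indices in $\{1,\dots,m\}$ uniformly at random among the $m^2-m$ such pairs, independently of all previous choices. Then set $\mu_k=\langle a_r,a_s\rangle$, $y_k=x_{k-1}+(b_s-\langle x_{k-1},a_s\rangle)a_s$, $v_k=\frac{a_r-\mu_k a_s}{\sqrt{1-\mu_k^2}}$, $\beta_k=\frac{b_r-b_s\mu_k}{\sqrt{1-\mu_k^2}}$, and $x_k=y_k+(\beta_k-\langle y_k,v_k\rangle)v_k$. Coherence parameters: $\Delta=\max_{j\ne k}|\langle a_j,a_k\rangle|$ and $\delta=\min_{j\ne k}|\langle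 a_j,a_k\rangle|$. Scaled condition number: $R=\|A\|_F^2\|A^{-1}\|^2$, where $\|A^{-1}\|=\inf\{M: M\|Az\|_2\ge\|z\|_2\ \text{for all } z\}$, i.e. the reciprocal of the smallest singular value of $A$. *)

theory Defs
  imports "HOL-Analysis.Analysis"
begin

text \<open>Rows of A are A $ i. One step of the two-subspace Kaczmarz method with
  the ordered pair (r,s) of row indices, starting from the previous iterate xp.\<close>
definition tsk_step :: "real^'n^'m \<Rightarrow> real^'m \<Rightarrow> 'm \<Rightarrow> 'm \<Rightarrow> real^'n \<Rightarrow> real^'n" where
  "tsk_step A b r s xp =
    (let mu = (A $ r) \<bullet> (A $ s);
         y = xp + (b $ s - xp \<bullet> (A $ s)) *\<^sub>R (A $ s);
         v = (1 / sqrt (1 - mu\<^sup>2)) *\<^sub>R (A $ r - mu *\<^sub>R (A $ s));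
         beta = (b $ r - b $ s * mu) / sqrt (1 - mu\<^sup>2)
     in y + (beta - y \<bullet> v) *\<^sub>R v)"

text \<open>Conditional expectation of f(x_k) given x_{k-1} = xp: uniform average over
  the m^2 - m ordered pairs of distinct indices.\<close>
definition tsk_expect :: "real^'n^'m \<Rightarrow> real^'m \<Rightarrow> real^'n \<Rightarrow> (real^'n \<Rightarrow> real) \<Rightarrow> real" where
  "tsk_expect A b xp f =
    (\<Sum>p\<in>{(r,s). r \<noteq> s}. f (tsk_step A b (fst p) (snd p) xp))
      / (real CARD('m)^2 - real CARD('m))"

definition standardized :: "real^'n^'m \<Rightarrow> bool" where
  "standardized A \<longleftrightarrow> (\<forall>i. norm (A $ i) = 1)"

definition no_parallel_rows :: "real^'n^'m \<Rightarrow> bool" where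
  "no_parallel_rows A \<longleftrightarrow> (\<forall>r s. r \<noteq> s \<longrightarrow> \<bar>(A $ r) \<bullet> (A $ s)\<bar> < 1)"

definition coh_max :: "real^'n^'m \<Rightarrow> real" where
  "coh_max A = Max {\<bar>(A $ j) \<bullet> (A $ k)\<bar> | j k. j \<noteq> k}"

definition coh_min :: "real^'n^'m \<Rightarrow> real" where
  "coh_min A = Min {\<bar>(A $ j) \<bullet> (A $ k)\<bar> | j k. j \<noteq> k}"

definition frob_sq :: "real^'n^'m \<Rightarrow> real" where
  "frob_sq A = (\<Sum>i\<in>UNIV. \<Sum>j\<in>UNIV. (A $ i $ j)\<^sup>2)"

definition inv_norm :: "real^'n^'m \<Rightarrow> real" where
  "inv_norm A = Inf {M. \<forall>z. M * norm (A *v z) \<ge> norm z}"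

definition scaled_cond :: "real^'n^'m \<Rightarrow> real" where
  "scaled_cond A = frob_sq A * (inv_norm A)\<^sup>2"

end

theory Submission
  imports Defs "HOL-Analysis.Analysis"
begin


lemma step_err:
  fixes A :: "real^'n^'m"
  assumes n1: "norm (A$r) = 1" "norm (A$s) = 1" and mu: "\<bar>(A$r)\<bullet>(A$s)\<bar> < 1" and b: "b = A *v x"
  shows "(norm (x - tsk_step A b r s xp))^2 = (norm (x-xp))^2 - ((A$s)\<bullet>(x-xp))^2
     - ((A$r)\<bullet>(x-xp) - ((A$r)\<bullet>(A$s)) * ((A$s)\<bullet>(x-xp)))^2 / (1 - ((A$r)\<bullet>(A$s))^2)"
proof -
  define a where "a = A$s"
  define ar where "ar = A$r"
  define mu where "mu = ar \<bullet> a"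
  define e where "e = x - xp"
  define cs where "cs = a \<bullet> e"
  define cr where "cr = ar \<bullet> e"
  define sq where "sq = sqrt (1 - mu^2)"
  define w where "w = ar - mu *\<^sub>R a"
  define v where "v = (1/sq) *\<^sub>R w"
  define y where "y = xp + (b$s - xp \<bullet> a) *\<^sub>R a"
  define beta where "beta = (b$r - b$s * mu) / sq"
  have step: "tsk_step A b r s xp = y + (beta - y \<bullet> v) *\<^sub>R v"
    by (simp add: tsk_step_def Let_def a_def ar_def mu_def sq_def w_def v_def y_def beta_def)
  have bs: "b$s = a \<bullet> x" "b$r = ar \<bullet> x"
    by (simp_all add: b matrix_vector_mul_component a_def ar_def)
  have mu2: "mu^2 < 1" using mu unfolding mu_def a_def ar_def
    by (metis abs_square_less_1)
  have sqpos: "sq > 0" using mu2 by (simp add: sq_def)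
  have sq2: "sq^2 = 1 - mu^2" using mu2 by (simp add: sq_def)
  have aa: "a \<bullet> a = 1" "ar \<bullet> ar = 1" using n1 by (simp_all add: a_def ar_def norm_eq_1)
  have d: "x - y = e - cs *\<^sub>R a"
    by (simp add: y_def e_def cs_def bs algebra_simps inner_diff_right inner_commute)
  have beta_eq: "beta = x \<bullet> v"
    by (simp add: beta_def v_def w_def bs inner_diff_right inner_commute mu_def algebra_simps divide_simps)
  have xk: "x - tsk_step A b r s xp = (x - y) - ((x - y) \<bullet> v) *\<^sub>R v"
    by (simp add: step beta_eq inner_diff_left algebra_simps)
  have ww: "w \<bullet> w = 1 - mu^2"
    by (simp add: w_def inner_diff_left inner_diff_right aa mu_def inner_commute power2_eq_square algebra_simps)
  have vv: "v \<bullet> v = 1"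
    using sqpos sq2 ww mu2 by (simp add: v_def power2_eq_square)
  have av: "a \<bullet> v = 0"
    by (simp add: v_def w_def inner_diff_right aa mu_def inner_commute)
  have dv: "(x - y) \<bullet> v = (cr - mu * cs) / sq"
    using av by (simp add: d inner_diff_left v_def w_def inner_diff_right cr_def cs_def inner_commute aa mu_def)
  have dd: "(x - y) \<bullet> (x - y) = e \<bullet> e - cs^2"
    by (simp add: d inner_diff_left inner_diff_right aa cs_def inner_commute power2_eq_square)
  have "(norm (x - tsk_step A b r s xp))^2 = (x - y) \<bullet> (x - y) - ((x - y) \<bullet> v)^2"
    unfolding xk power2_norm_eq_inner
    by (simp add: inner_diff_left inner_diff_right vv inner_commute power2_eq_square)
  also have "\<dots> = e \<bullet> e - cs^2 - (cr - mu * cs)^2 / (1 - mu^2)"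
    by (simp add: dd dv power_divide sq2)
  finally show ?thesis
    by (simp add: power2_norm_eq_inner e_def cs_def cr_def mu_def a_def ar_def)
qed



lemma sum_offdiag:
  fixes F :: "'m::finite \<times> 'm \<Rightarrow> real"
  shows "sum F {(r,s). r \<noteq> s} = (\<Sum>r\<in>UNIV. \<Sum>s\<in>UNIV. F (r,s)) - (\<Sum>r\<in>UNIV. F (r,r))"
proof -
  have eq: "{(r,s). r \<noteq> s} = UNIV - range (\<lambda>r::'m. (r,r))" by auto
  have "sum F {(r,s). r \<noteq> s} = sum F UNIV - sum F (range (\<lambda>r::'m. (r,r)))"
    unfolding eq by (rule sum_diff) auto
  also have "sum F UNIV = (\<Sum>r\<in>UNIV. \<Sum>s\<in>UNIV. F (r,s))"
    unfolding sum.cartesian_product UNIV_Times_UNIV by (simp add: case_prod_beta')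
  also have "sum F (range (\<lambda>r::'m. (r,r))) = (\<Sum>r\<in>UNIV. F (r,r))"
    by (subst sum.reindex) (auto simp: inj_on_def)
  finally show ?thesis .
qed

lemma inv_norm_props:
  fixes A :: "real^'n^'m"
  assumes inj: "inj ((*v) A)"
  shows "inv_norm A > 0" "\<And>z. norm z \<le> inv_norm A * norm (A *v z)"
proof -
  obtain B where B: "B > 0" "\<And>z. B * norm z \<le> norm (A *v z)"
    using linear_inj_bounded_below_pos[OF matrix_vector_mul_linear inj] by blast
  define S where "S = {M. \<forall>z. M * norm (A *v z) \<ge> norm z}"
  have inS: "1/B \<in> S" unfolding S_def
  proof (intro CollectI allI)
    fix z show "norm z \<le> 1/B * norm (A *v z)" using B by (simp add: field_simps mult.commute)
  qed
  have ne: "S \<noteq> {}" using inS by blast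
  define z0 :: "real^'n" where "z0 = axis undefined 1"
  have z0: "norm z0 = 1" by (simp add: z0_def)
  have Sgt: "M \<ge> 1 / norm (A *v z0)" "A *v z0 \<noteq> 0" if "M \<in> S" for M
  proof -
    have h: "M * norm (A *v z0) \<ge> 1" using that z0 unfolding S_def by (metis mem_Collect_eq)
    then show "A *v z0 \<noteq> 0" by auto
    then show "M \<ge> 1 / norm (A *v z0)" using h by (simp add: field_simps)
  qed
  have Az0: "A *v z0 \<noteq> 0" using Sgt(2)[OF inS] .
  have bdd: "bdd_below S" using Sgt by (auto simp: bdd_below_def)
  have ge: "inv_norm A \<ge> 1 / norm (A *v z0)"
    unfolding inv_norm_def S_def[symmetric] by (rule cInf_greatest[OF ne]) (use Sgt in auto)
  have "0 < 1 / norm (A *v z0)" using Az0 by simp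
  then show "inv_norm A > 0" using ge by linarith
  show "norm z \<le> inv_norm A * norm (A *v z)" for z
  proof (cases "A *v z = 0")
    case True
    then have "z = 0" using inj by (metis injD matrix_vector_mult_0_right)
    then show ?thesis by simp
  next
    case False
    have "norm z / norm (A *v z) \<le> inv_norm A"
      unfolding inv_norm_def S_def[symmetric]
    proof (rule cInf_greatest[OF ne])
      fix M assume "M \<in> S"
      then have "M * norm (A *v z) \<ge> norm z" unfolding S_def by blast
      then show "norm z / norm (A *v z) \<le> M" using False by (simp add: field_simps)
    qed
    then show ?thesis using False by (simp add: field_simps)
  qed
qed

lemma f_diff:
  fixes t a :: real
  assumes "0 \<le> a" "0 \<le> t"
  shows "t^2*(1-t)/(1+t) - a^2*(1-a)/(1+a) = (t - a) * (t*(1 - t - a*t) + a*(1 - a - a*t)) / ((1+t)*(1+a))"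
proof -
  have n: "t^2*(1-t)*(1+a) - a^2*(1-a)*(1+t) = (t - a) * (t*(1 - t - a*t) + a*(1 - a - a*t))"
    by (simp add: power2_eq_square algebra_simps)
  have "t^2*(1-t)/(1+t) - a^2*(1-a)/(1+a) = (t^2*(1-t)*(1+a) - a^2*(1-a)*(1+t)) / ((1+t)*(1+a))"
    using assms by (simp add: diff_frac_eq)
  then show ?thesis using n by simp
qed


lemma f_unimodal:
  fixes a t b :: real
  assumes "0 \<le> a" "a \<le> t" "t \<le> b" "b < 1"
  shows "min (a^2*(1-a)/(1+a)) (b^2*(1-b)/(1+b)) \<le> t^2*(1-t)/(1+t)"
proof (cases "t + t^2 \<le> 1")
  case True
  have "a*t \<le> t*t" using assms by (simp add: mult_right_mono)
  moreover have "a*a \<le> t*t" using assms by (simp add: mult_mono)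
  ultimately have p: "0 \<le> t*(1 - t - a*t) + a*(1 - a - a*t)"
    using assms True by (intro add_nonneg_nonneg mult_nonneg_nonneg) (auto simp: power2_eq_square)
  have "0 \<le> (t - a) * (t*(1 - t - a*t) + a*(1 - a - a*t)) / ((1+t)*(1+a))"
    using assms p by simp
  then have "a^2*(1-a)/(1+a) \<le> t^2*(1-t)/(1+t)"
    using f_diff[of a t] assms by simp
  then show ?thesis by simp
next
  case False
  have "t*t \<le> b*t" using assms by (simp add: mult_right_mono)
  moreover have "t*t \<le> b*b" using assms by (simp add: mult_mono)
  ultimately have p1: "1 - b - t*b \<le> 0" "1 - t - t*b \<le> 0"
    using assms False by (auto simp: power2_eq_square algebra_simps)
  have p: "b*(1 - b - t*b) + t*(1 - t - t*b) \<le> 0"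
    using p1 assms by (smt (verit) mult_nonneg_nonpos)
  have "(b - t) * (b*(1 - b - t*b) + t*(1 - t - t*b)) / ((1+b)*(1+t)) \<le> 0"
    using assms p by (intro divide_nonpos_pos mult_nonneg_nonpos) auto
  then have "b^2*(1-b)/(1+b) \<le> t^2*(1-t)/(1+t)"
    using f_diff[of t b] assms by simp
  then show ?thesis by simp
qed

lemma pair_bound:
  fixes x y mu D :: real
  assumes "\<bar>mu\<bar> < 1" "D \<le> \<bar>mu\<bar>^2*(1-\<bar>mu\<bar>)/(1+\<bar>mu\<bar>)"
  shows "D * (x^2 + y^2) \<le> (x - mu*y)^2 * mu^2 / (1 - mu^2) + (y - mu*x)^2 * mu^2 / (1 - mu^2)"
proof -
  define u where "u = \<bar>mu\<bar>"
  have u: "0 \<le> u" "u < 1" "mu^2 = u^2" using assms by (auto simp: u_def)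
  have xy: "4*mu*x*y \<le> 2*u*(x^2+y^2)"
  proof -
    have "4*mu*x*y \<le> 4*u*\<bar>x\<bar>*\<bar>y\<bar>" unfolding u_def by (simp add: abs_mult[symmetric])
    also have "\<dots> \<le> 2*u*(x^2+y^2)"
    proof -
      have "2*\<bar>x\<bar>*\<bar>y\<bar> \<le> x^2+y^2" using sum_squares_bound[of "\<bar>x\<bar>" "\<bar>y\<bar>"] by simp
      then have "u * (2*\<bar>x\<bar>*\<bar>y\<bar>) \<le> u * (x^2+y^2)" using u(1) by (rule mult_left_mono)
      then show ?thesis by (simp add: algebra_simps)
    qed
    finally show ?thesis .
  qed
  have sq: "(1-u)^2*(x^2+y^2) \<le> (x - mu*y)^2 + (y - mu*x)^2"
  proof -
    have e1: "(x - mu*y)^2 + (y - mu*x)^2 = (1+mu^2)*(x^2+y^2) - 4*mu*x*y"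
      by (simp add: power2_eq_square algebra_simps)
    have e2: "(1-u)^2*(x^2+y^2) = (1+u^2)*(x^2+y^2) - 2*u*(x^2+y^2)"
      by (simp add: power2_eq_square algebra_simps)
    show ?thesis unfolding e1 e2 u(3) using xy by linarith
  qed
  have "u^2 < 1" using u by (simp add: abs_square_less_1)
  then have pos: "0 < 1 - mu^2" using u by simp
  have "D * (x^2 + y^2) \<le> u^2*(1-u)/(1+u) * (x^2+y^2)"
    using assms(2) by (intro mult_right_mono) (auto simp: u_def)
  also have "u^2*(1-u)/(1+u) = (1-u)^2 * (u^2 / (1 - u^2))"
  proof -
    have f: "1 - u^2 = (1-u)*(1+u)" by (simp add: power2_eq_square algebra_simps)
    have "1 - u \<noteq> 0" "1 + u \<noteq> 0" using u by auto
    then show ?thesis unfolding f by (simp add: power2_eq_square)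
  qed
  also have "(1-u)^2 * (u^2 / (1 - u^2)) * (x^2+y^2) \<le> ((x - mu*y)^2 + (y - mu*x)^2) * (u^2 / (1 - u^2))"
  proof -
    have nn: "0 \<le> u^2/(1-u^2)" using pos u(3) by simp
    show ?thesis using mult_right_mono[OF sq nn] by (simp add: mult_ac)
  qed
  also have "\<dots> = (x - mu*y)^2 * mu^2 / (1 - mu^2) + (y - mu*x)^2 * mu^2 / (1 - mu^2)"
    using u by (simp add: add_divide_distrib algebra_simps)
  finally show ?thesis .
qed



lemma final_arith:
  fixes m t E0 S T1 T2 D R :: real
  assumes m2: "2 \<le> m" and t: "0 < t" "t \<le> m" and E0: "0 \<le> E0"
    and S: "t*E0 \<le> S" "S \<le> m*E0" and D: "0 \<le> D"
    and T1: "t*(m*E0 - S) \<le> T1" and T2: "D*(m-1)*S \<le> T2" and R: "R = m / t"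
  shows "((m^2 - m)*E0 - (m-1)*S - T1 - T2) / (m^2 - m) \<le> ((1 - 1/R)^2 - D/R) * E0"
proof -
  define \<Phi> where "\<Phi> X = (m-1)*X + t*(m*E0 - X) + D*(m-1)*X - (m-1)*(2*t - t^2/m + D*t)*E0" for X
  define \<kappa> where "\<kappa> = (m-1)*(1+D) - t"
  have lin: "\<Phi> X = \<Phi> Y + \<kappa>*(X - Y)" for X Y
    by (simp add: \<Phi>_def \<kappa>_def algebra_simps)
  have mpos: "m > 0" using m2 by simp
  have p1: "\<Phi> (t*E0) = E0 * t * (m - t) / m"
    using mpos by (simp add: \<Phi>_def field_simps power2_eq_square)
  have p2: "\<Phi> (m*E0) = E0 * (m-1) * ((m-t)^2/m + D*(m-t))"
    using mpos by (simp add: \<Phi>_def field_simps power2_eq_square)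
  have p1n: "\<Phi> (t*E0) \<ge> 0" unfolding p1 using E0 t mpos by simp
  have p2n: "\<Phi> (m*E0) \<ge> 0" unfolding p2 using E0 t mpos m2 D by simp
  have key: "\<Phi> S \<ge> 0"
  proof (cases "\<kappa> \<ge> 0")
    case True
    have "\<kappa>*(S - t*E0) \<ge> 0" using True S by simp
    then show ?thesis using lin[of S "t*E0"] p1n by linarith
  next
    case False
    have "\<kappa>*(S - m*E0) \<ge> 0" using False S by (simp add: mult_nonpos_nonpos)
    then show ?thesis using lin[of S "m*E0"] p2n by linarith
  qed
  have Rinv: "1/R = t/m" using R by simp
  have N: "m^2 - m > 0" using m2 by (simp add: power2_eq_square)
  have eq: "(m^2-m)*((1 - t/m)^2 - D*(t/m)) = (m^2 - m) - (m-1)*(2*t - t^2/m + D*t)"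
    using mpos by (simp add: field_simps power2_eq_square)
  have "(m^2 - m)*E0 - (m-1)*S - T1 - T2 \<le> (m^2 - m)*E0 - (m-1)*S - t*(m*E0 - S) - D*(m-1)*S"
    using T1 T2 by linarith
  also have "\<dots> = (m^2-m)*((1 - t/m)^2 - D*(t/m)) * E0 - \<Phi> S"
    unfolding eq by (simp add: \<Phi>_def algebra_simps)
  also have "\<dots> \<le> (m^2-m)*((1 - t/m)^2 - D*(t/m)) * E0" using key by simp
  finally have "((m^2 - m)*E0 - (m-1)*S - T1 - T2) / (m^2 - m) \<le> ((1 - t/m)^2 - D*(t/m)) * E0"
    using N by (simp add: divide_le_eq mult_ac)
  then show ?thesis using Rinv by (simp add: divide_inverse mult_ac)
qed



theorem lemma3:
  fixes A :: "real^'n^'m" and x xp :: "real^'n" and b :: "real^'m"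
  assumes "CARD('m) > CARD('n)"
    and "rank A = CARD('n)"
    and "standardized A"
    and "no_parallel_rows A"
    and "b = A *v x"
  shows "tsk_expect A b xp (\<lambda>xk. (norm (x - xk))\<^sup>2)
    \<le> ((1 - 1 / scaled_cond A)\<^sup>2
        - min ((coh_min A)\<^sup>2 * (1 - coh_min A) / (1 + coh_min A))
              ((coh_max A)\<^sup>2 * (1 - coh_max A) / (1 + coh_max A)) / scaled_cond A)
       * (norm (x - xp))\<^sup>2"
proof -
  define m where "m = real CARD('m)"
  define e where "e = x - xp"
  define E0 where "E0 = (norm e)^2"
  define c where "c i = A$i \<bullet> e" for i
  define mu where "mu r s = A$r \<bullet> A$s" for r s
  define K where "K = inv_norm A"
  define t where "t = 1 / K^2"
  define P where "P = {(r::'m,s). r \<noteq> s}"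
  define S where "S = (\<Sum>i\<in>UNIV. (c i)^2)"
  define D where "D = min ((coh_min A)\<^sup>2 * (1 - coh_min A) / (1 + coh_min A))
              ((coh_max A)\<^sup>2 * (1 - coh_max A) / (1 + coh_max A))"
  define q1 where "q1 p = (c (fst p) - mu (fst p) (snd p) * c (snd p))^2" for p
  define q2 where "q2 p = q1 p * (mu (fst p) (snd p))^2 / (1 - (mu (fst p) (snd p))^2)" for p
  have inj: "inj ((*v) A)" using assms(2) full_rank_injective by blast
  have Kpos: "K > 0" and Kb: "\<And>z. norm z \<le> K * norm (A *v z)"
    using inv_norm_props[OF inj] unfolding K_def by auto
  have unit: "\<And>i. norm (A$i) = 1" using assms(3) unfolding standardized_def by blast
  have np: "\<And>r s. r \<noteq> s \<Longrightarrow> \<bar>mu r s\<bar> < 1" using assms(4) unfolding no_parallel_rows_def mu_def by blast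
  have mu_sym: "\<And>r s. mu r s = mu s r" by (simp add: mu_def inner_commute)
  have mu_diag: "\<And>r. mu r r = 1" using unit by (simp add: mu_def norm_eq_1)
  have nv: "(norm v)^2 = (\<Sum>i\<in>UNIV. (v$i)^2)" for v :: "real^'m"
    unfolding power2_norm_eq_inner inner_vec_def by (simp add: power2_eq_square)
  have normAv: "\<And>u. (norm (A *v u))^2 = (\<Sum>i\<in>UNIV. (A$i \<bullet> u)^2)"
    unfolding nv matrix_vector_mul_component ..
  have lowb: "t * (norm u)^2 \<le> (norm (A *v u))^2" for u
  proof -
    have "(norm u)^2 \<le> (K * norm (A *v u))^2" using Kb[of u] by (simp add: power_mono)
    then show ?thesis using Kpos by (simp add: t_def field_simps power_mult_distrib)
  qed
  have m2: "m \<ge> 2"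
  proof -
    have "CARD('n) > 0" by simp
    then show ?thesis using assms(1) unfolding m_def by linarith
  qed
  have frob: "frob_sq A = m"
  proof -
    have "\<And>i. (\<Sum>j\<in>UNIV. (A $ i $ j)\<^sup>2) = 1"
      using unit by (simp add: norm_eq_1 inner_vec_def power2_eq_square)
    then show ?thesis by (simp add: frob_sq_def m_def)
  qed
  have R: "scaled_cond A = m / t" using Kpos by (simp add: scaled_cond_def frob K_def[symmetric] t_def)
  have tpos: "t > 0" using Kpos by (simp add: t_def)
  have tm: "t \<le> m"
  proof -
    define z0 :: "real^'n" where "z0 = axis undefined 1"
    have z0: "norm z0 = 1" by (simp add: z0_def)
    have "(A$i \<bullet> z0)^2 \<le> 1" for i
    proof -
      have "\<bar>A$i \<bullet> z0\<bar> \<le> 1" using Cauchy_Schwarz_ineq2[of "A$i" z0] unit z0 by simp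
      then show ?thesis by (simp add: abs_square_le_1)
    qed
    then have "(norm (A *v z0))^2 \<le> m" unfolding normAv m_def
      using sum_bounded_above[of UNIV "\<lambda>i. (A$i \<bullet> z0)^2" 1] by simp
    then have "t * 1 \<le> m" using lowb[of z0] z0 by simp
    then show ?thesis by simp
  qed
  have E0: "0 \<le> E0" by (simp add: E0_def)
  have S_eq: "S = (norm (A *v e))^2" by (simp add: normAv S_def c_def)
  have S1: "t*E0 \<le> S" unfolding S_eq E0_def by (rule lowb)
  have S2: "S \<le> m*E0"
  proof -
    have "(c i)^2 \<le> E0" for i
    proof -
      have "\<bar>c i\<bar> \<le> norm e" using Cauchy_Schwarz_ineq2[of "A$i" e] unit by (simp add: c_def)
      then show ?thesis unfolding E0_def using power_mono[of "\<bar>c i\<bar>" "norm e" 2] by simp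
    qed
    then show ?thesis unfolding S_def m_def using sum_bounded_above[of UNIV "\<lambda>i. (c i)^2" E0] by simp
  qed
  define C where "C = {\<bar>(A $ j) \<bullet> (A $ k)\<bar> | j k. j \<noteq> k}"
  have finC: "finite C"
  proof -
    have "C \<subseteq> (\<lambda>(j,k). \<bar>(A $ j) \<bullet> (A $ k)\<bar>) ` UNIV" unfolding C_def by auto
    then show ?thesis using finite_subset by (metis finite finite_imageI)
  qed
  obtain r0 s0 :: 'm where rs0: "r0 \<noteq> s0"
  proof -
    have "\<not> card (UNIV::'m set) \<le> Suc 0" using m2 unfolding m_def by simp
    then have "\<not> (\<forall>x\<in>(UNIV::'m set). \<forall>y\<in>UNIV. x = y)" using card_le_Suc0_iff_eq[of "UNIV::'m set"] by simp
    then show ?thesis using that by blast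
  qed
  have neC: "C \<noteq> {}" using rs0 unfolding C_def by blast
  have inC: "\<And>r s. r \<noteq> s \<Longrightarrow> \<bar>mu r s\<bar> \<in> C" unfolding C_def mu_def by blast
  have cmin: "coh_min A = Min C" by (simp add: coh_min_def C_def)
  have cmax: "coh_max A = Max C" by (simp add: coh_max_def C_def)
  have Cl1: "\<And>z. z \<in> C \<Longrightarrow> 0 \<le> z \<and> z < 1" unfolding C_def using np unfolding mu_def by auto
  have dmin0: "0 \<le> coh_min A" using Cl1 Min_in[OF finC neC] cmin by auto
  have dmax1: "coh_max A < 1" using Cl1 Max_in[OF finC neC] cmax by auto
  have Dle: "D \<le> \<bar>mu r s\<bar>^2*(1-\<bar>mu r s\<bar>)/(1+\<bar>mu r s\<bar>)" if "r \<noteq> s" for r s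
    unfolding D_def
  proof (rule f_unimodal)
    show "0 \<le> coh_min A" by (fact dmin0)
    show "coh_min A \<le> \<bar>mu r s\<bar>" unfolding cmin using Min_le[OF finC inC[OF that]] .
    show "\<bar>mu r s\<bar> \<le> coh_max A" unfolding cmax using Max_ge[OF finC inC[OF that]] .
    show "coh_max A < 1" by (fact dmax1)
  qed
  have D0: "0 \<le> D"
  proof -
    have "0 \<le> coh_max A" using dmin0 Min_le[OF finC inC[OF rs0]] Max_ge[OF finC inC[OF rs0]] cmin cmax by linarith
    moreover have "coh_min A < 1" using dmax1 Min_le[OF finC inC[OF rs0]] Max_ge[OF finC inC[OF rs0]] cmin cmax by linarith
    ultimately show ?thesis unfolding D_def using dmin0 dmax1
      by (intro min.boundedI divide_nonneg_pos mult_nonneg_nonneg) auto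
  qed
  have pair: "(norm (x - tsk_step A b (fst p) (snd p) xp))^2 = E0 - (c (snd p))^2 - q1 p - q2 p"
    if "p \<in> P" for p
  proof -
    obtain r s where p: "p = (r,s)" and rs: "r \<noteq> s" using \<open>p \<in> P\<close> unfolding P_def by auto
    have m1: "\<bar>mu r s\<bar> < 1" using np[OF rs] .
    have "(mu r s)^2 < 1" using m1 by (simp add: abs_square_less_1)
    then have nz: "1 - (mu r s)^2 \<noteq> 0" by simp
    have "(norm (x - tsk_step A b r s xp))^2 = E0 - (c s)^2 - q1 p / (1 - (mu r s)^2)"
      using step_err[OF unit unit m1[unfolded mu_def] assms(5), of xp]
      by (simp add: E0_def e_def c_def mu_def q1_def p)
    also have "q1 p / (1 - (mu r s)^2) = q1 p + q2 p"
      using nz by (simp add: q2_def p field_simps)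
    finally show ?thesis by (simp add: p)
  qed
  have sumP: "(\<Sum>p\<in>P. (norm (x - tsk_step A b (fst p) (snd p) xp))^2)
      = (\<Sum>p\<in>P. E0) - (\<Sum>p\<in>P. (c (snd p))^2) - (\<Sum>p\<in>P. q1 p) - (\<Sum>p\<in>P. q2 p)"
    by (simp add: sum.cong[OF refl pair] sum_subtractf)
  have sE: "(\<Sum>p\<in>P. E0) = (m^2 - m) * E0"
    unfolding P_def sum_offdiag by (simp add: m_def power2_eq_square algebra_simps)
  have sC: "(\<Sum>p\<in>P. (c (snd p))^2) = (m - 1) * S"
  proof -
    have "(\<Sum>r::'m\<in>UNIV. \<Sum>s\<in>UNIV. (c s)^2) = m*S" by (simp add: m_def S_def)
    then show ?thesis unfolding P_def sum_offdiag by (simp add: S_def[symmetric] algebra_simps)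
  qed
  have sC': "(\<Sum>p\<in>P. (c (fst p))^2) = (m - 1) * S"
  proof -
    have "(\<Sum>r\<in>UNIV. \<Sum>s::'m\<in>UNIV. (c r)^2) = m*S" by (simp add: m_def S_def sum_distrib_left)
    then show ?thesis unfolding P_def sum_offdiag by (simp add: S_def[symmetric] algebra_simps)
  qed
  have T1: "t * (m*E0 - S) \<le> (\<Sum>p\<in>P. q1 p)"
  proof -
    have diag: "(\<Sum>r\<in>UNIV. q1 (r,r)) = 0" by (simp add: q1_def mu_diag)
    have "(\<Sum>r\<in>UNIV. \<Sum>s\<in>UNIV. q1 (r,s)) = (\<Sum>s\<in>UNIV. \<Sum>r\<in>UNIV. q1 (r,s))" by (rule sum.swap)
    also have "\<dots> = (\<Sum>s\<in>UNIV. (norm (A *v (e - c s *\<^sub>R A$s)))^2)"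
      by (simp add: normAv q1_def inner_diff_right c_def mu_def mult.commute)
    also have "\<dots> \<ge> (\<Sum>s\<in>UNIV. t * (norm (e - c s *\<^sub>R A$s))^2)"
      by (rule sum_mono) (rule lowb)
    also have "(\<Sum>s\<in>UNIV. t * (norm (e - c s *\<^sub>R A$s))^2) = (\<Sum>s\<in>UNIV. t * (E0 - (c s)^2))"
    proof (rule sum.cong[OF refl])
      fix s
      have "(norm (e - c s *\<^sub>R A$s))^2 = E0 - (c s)^2"
        using unit[of s] unfolding E0_def c_def power2_norm_eq_inner
        by (simp add: inner_diff_left inner_diff_right norm_eq_1 inner_commute power2_eq_square)
      then show "t * (norm (e - c s *\<^sub>R A$s))^2 = t * (E0 - (c s)^2)" by simp
    qed
    also have "\<dots> = t * (m*E0 - S)"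
      by (simp add: sum_distrib_left[symmetric] sum_subtractf m_def S_def)
    finally show ?thesis unfolding P_def sum_offdiag diag by simp
  qed
  have T2: "D*(m-1)*S \<le> (\<Sum>p\<in>P. q2 p)"
  proof -
    have swap: "(\<Sum>p\<in>P. q2 (snd p, fst p)) = (\<Sum>p\<in>P. q2 p)"
      unfolding P_def sum_offdiag by (simp add: sum.swap[of "\<lambda>r s. q2 (s, r)"])
    have "2 * (D*(m-1)*S) = (\<Sum>p\<in>P. D * ((c (fst p))^2 + (c (snd p))^2))"
    proof -
      have "(\<Sum>p\<in>P. D * ((c (fst p))^2 + (c (snd p))^2))
          = D * ((\<Sum>p\<in>P. (c (fst p))^2) + (\<Sum>p\<in>P. (c (snd p))^2))"
        by (simp only: sum_distrib_left sum.distrib distrib_left)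
      then show ?thesis unfolding sC sC' by (simp add: algebra_simps)
    qed
    also have "\<dots> \<le> (\<Sum>p\<in>P. q2 p + q2 (snd p, fst p))"
    proof (rule sum_mono)
      fix p assume "p \<in> P"
      then obtain r s where p: "p = (r,s)" and rs: "r \<noteq> s" unfolding P_def by auto
      show "D * ((c (fst p))^2 + (c (snd p))^2) \<le> q2 p + q2 (snd p, fst p)"
        using pair_bound[OF np[OF rs] Dle[OF rs], of "c r" "c s"]
        by (simp add: p q2_def q1_def mu_sym[of s r])
    qed
    also have "\<dots> = 2 * (\<Sum>p\<in>P. q2 p)" by (simp add: sum.distrib swap)
    finally show ?thesis by simp
  qed
  have "tsk_expect A b xp (\<lambda>xk. (norm (x - xk))\<^sup>2)
      = ((m^2 - m)*E0 - (m-1)*S - (\<Sum>p\<in>P. q1 p) - (\<Sum>p\<in>P. q2 p)) / (m^2 - m)"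
    unfolding tsk_expect_def P_def[symmetric] sumP sE sC m_def by simp
  also have "\<dots> \<le> ((1 - 1/scaled_cond A)^2 - D/scaled_cond A) * E0"
    by (rule final_arith[OF m2 tpos tm E0 S1 S2 D0 T1 T2 R])
  finally show ?thesis unfolding D_def E0_def e_def .
qed


end
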